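(* In the setting of the context, let $\bm s,\bm s'\in\mathcal S$ be starting magnetizations with $\bm s\ge\bm s'$ entrywise. Then for every $t\ge0$, entrywise, \[ \mathbf 0\le\big(\mathbb E_{\bm s}S^{(i)}_t-\mathbb E_{\bm s'}S^{(i)}_t\big)_{i=1}^m\le\mathbf Q_n^t(\bm s-\bm s'), \] where $\mathbb E_{\bm s}$ denotes expectation for the magnetization chain started at $\bm s$.
   Context: Fix $m\ge1$, proportions $p_1,\dots,p_m>0$ with $\sum_ip_i=1$, a symmetric matrix $\mathbf K=(k_{ij})$ with all $k_{ij}>0$, and $\beta\ge0$; $n$ is a positive integer with $np_i\in\mathbb N$. The vertex set $V=\{1,\dots,n\}$ is partitioned into blocks $G_1,\dots,G_m$ with $|G_i|=np_i$; for $v\in G_i,w\in G_j$ put $K(v,w)=k_{ij}/n$. The Glauber dynamics $(\sigma_t)$ on $\Omega=\{-1,+1\}^V$ picks at each step a uniform random vertex $v$ and sets its spin to $\pm1$ with probability $\frac{1\pm\tanh(\beta S^v)}2$, $S^v=\sum_{w\ne v}K(v,w)\sigma(w)$. The magnetization chain is $\bm S_t=(S_t^{(1)},\dots,S_t^{(m)})$ with $S_t^{(i)}=\frac1n\sum_{v\in G_i}\sigma_t(v)$; it is a Markov chain on $\mathcal S=\prod_i\{-p_i,-p_i+2/n,\dots,p_i\}$. Let $\mathbf B=(p_ik_{ij})$ and $\mathbf Q_n=(1-\frac1n)\mathbf I_m+\frac\beta n\mathbf B$. *)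

theory Defs
  imports "HOL-Probability.Probability"
begin

text \<open>Vertices are V = {1..n}; blk v \<in> {0..<m} is the block index of vertex v
  (blocks indexed 0..m-1 instead of 1..m).\<close>

definition verts :: "nat \<Rightarrow> nat set" where
  "verts n = {1..n}"

definition spin_configs :: "nat \<Rightarrow> (nat \<Rightarrow> real) set" where
  "spin_configs n = {\<sigma>. (\<forall>v\<in>verts n. \<sigma> v = 1 \<or> \<sigma> v = -1) \<and> (\<forall>v. v \<notin> verts n \<longrightarrow> \<sigma> v = 0)}"

definition Kint :: "nat \<Rightarrow> (nat \<Rightarrow> nat) \<Rightarrow> (nat \<Rightarrow> nat \<Rightarrow> real) \<Rightarrow> nat \<Rightarrow> nat \<Rightarrow> real" where
  "Kint n blk k v w = k (blk v) (blk w) / real n"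

definition local_field :: "nat \<Rightarrow> (nat \<Rightarrow> nat) \<Rightarrow> (nat \<Rightarrow> nat \<Rightarrow> real) \<Rightarrow> (nat \<Rightarrow> real) \<Rightarrow> nat \<Rightarrow> real" where
  "local_field n blk k \<sigma> v = (\<Sum>w\<in>verts n - {v}. Kint n blk k v w * \<sigma> w)"

definition glauber_step :: "nat \<Rightarrow> (nat \<Rightarrow> nat) \<Rightarrow> (nat \<Rightarrow> nat \<Rightarrow> real) \<Rightarrow> real \<Rightarrow> (nat \<Rightarrow> real) \<Rightarrow> (nat \<Rightarrow> real) pmf" where
  "glauber_step n blk k \<beta> \<sigma> =
     pmf_of_set (verts n) \<bind> (\<lambda>v.
     bernoulli_pmf ((1 + tanh (\<beta> * local_field n blk k \<sigma> v)) / 2) \<bind> (\<lambda>b.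
     return_pmf (\<sigma>(v := (if b then 1 else -1)))))"

definition glauber_dist :: "nat \<Rightarrow> (nat \<Rightarrow> nat) \<Rightarrow> (nat \<Rightarrow> nat \<Rightarrow> real) \<Rightarrow> real \<Rightarrow> (nat \<Rightarrow> real) \<Rightarrow> nat \<Rightarrow> (nat \<Rightarrow> real) pmf" where
  "glauber_dist n blk k \<beta> \<sigma> t = ((\<lambda>\<mu>. \<mu> \<bind> glauber_step n blk k \<beta>) ^^ t) (return_pmf \<sigma>)"

definition magnet :: "nat \<Rightarrow> (nat \<Rightarrow> nat) \<Rightarrow> (nat \<Rightarrow> real) \<Rightarrow> nat \<Rightarrow> real" where
  "magnet n blk \<sigma> i = (\<Sum>v\<in>{v\<in>verts n. blk v = i}. \<sigma> v) / real n"

definition exp_magnet :: "nat \<Rightarrow> (nat \<Rightarrow> nat) \<Rightarrow> (nat \<Rightarrow> nat \<Rightarrow> real) \<Rightarrow> real \<Rightarrow> (nat \<Rightarrow> real) \<Rightarrow> nat \<Rightarrow> nat \<Rightarrow> real" where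
  "exp_magnet n blk k \<beta> \<sigma> t i =
     measure_pmf.expectation (glauber_dist n blk k \<beta> \<sigma> t) (\<lambda>\<tau>. magnet n blk \<tau> i)"

definition Qmat :: "nat \<Rightarrow> (nat \<Rightarrow> real) \<Rightarrow> (nat \<Rightarrow> nat \<Rightarrow> real) \<Rightarrow> real \<Rightarrow> nat \<Rightarrow> nat \<Rightarrow> real" where
  "Qmat n p k \<beta> i j = (if i = j then 1 - 1 / real n else 0) + \<beta> / real n * (p i * k i j)"

definition mat_vec :: "nat \<Rightarrow> (nat \<Rightarrow> nat \<Rightarrow> real) \<Rightarrow> (nat \<Rightarrow> real) \<Rightarrow> nat \<Rightarrow> real" where
  "mat_vec m A x = (\<lambda>i. \<Sum>j<m. A i j * x j)"

definition mat_pow_vec :: "nat \<Rightarrow> (nat \<Rightarrow> nat \<Rightarrow> real) \<Rightarrow> nat \<Rightarrow> (nat \<Rightarrow> real) \<Rightarrow> nat \<Rightarrow> real" where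
  "mat_pow_vec m A t x = (mat_vec m A ^^ t) x"

end

theory Submission
  imports Defs
begin

lemma tanh_lip:
  fixes a b :: real assumes "b \<le> a" shows "tanh a - tanh b \<le> a - b"
proof -
  have "(\<lambda>x. x - tanh x) b \<le> (\<lambda>x. x - tanh x) a"
  proof (rule DERIV_nonneg_imp_nondecreasing[OF assms])
    fix x :: real
    have "cosh x \<noteq> 0" by (metis cosh_real_pos less_irrefl)
    then have "DERIV (\<lambda>x. x - tanh x) x :> 1 - (1 - tanh x ^ 2)"
      by (auto intro!: derivative_eq_intros)
    then show "\<exists>y. DERIV (\<lambda>x. x - tanh x) x :> y \<and> 0 \<le> y" by fastforce
  qed
  then show ?thesis by simp
qed

lemma dist_Suc:
  "glauber_dist n blk k \<beta> \<sigma> (Suc t) = glauber_step n blk k \<beta> \<sigma> \<bind> (\<lambda>\<tau>. glauber_dist n blk k \<beta> \<tau> t)"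
proof (induction t)
  case 0
  then show ?case by (simp add: glauber_dist_def bind_return_pmf bind_return_pmf')
next
  case (Suc t)
  have "glauber_dist n blk k \<beta> \<sigma> (Suc (Suc t)) = glauber_dist n blk k \<beta> \<sigma> (Suc t) \<bind> glauber_step n blk k \<beta>"
    by (simp add: glauber_dist_def)
  also have "\<dots> = glauber_step n blk k \<beta> \<sigma> \<bind> (\<lambda>\<tau>. glauber_dist n blk k \<beta> \<tau> t \<bind> glauber_step n blk k \<beta>)"
    by (simp add: Suc bind_assoc_pmf)
  also have "\<dots> = glauber_step n blk k \<beta> \<sigma> \<bind> (\<lambda>\<tau>. glauber_dist n blk k \<beta> \<tau> (Suc t))"
    by (simp add: glauber_dist_def)
  finally show ?case .
qed

lemma finite_step: "n \<ge> 1 \<Longrightarrow> finite (set_pmf (glauber_step n blk k \<beta> \<sigma>))"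
  unfolding glauber_step_def verts_def
  by (auto simp: set_bind_pmf intro!: finite_UN_I)

lemma finite_dist: "n \<ge> 1 \<Longrightarrow> finite (set_pmf (glauber_dist n blk k \<beta> \<sigma> t))"
proof (induction t arbitrary: \<sigma>)
  case 0 then show ?case by (simp add: glauber_dist_def)
next
  case (Suc t) then show ?case
    by (simp add: dist_Suc set_bind_pmf finite_step)
qed

definition qq where "qq n blk k \<beta> \<sigma> v = (1 + tanh (\<beta> * local_field n blk k \<sigma> v)) / 2"

lemma qq_bounds: "0 < qq n blk k \<beta> \<sigma> v" "qq n blk k \<beta> \<sigma> v < 1"
  using tanh_real_bounds[of "\<beta> * local_field n blk k \<sigma> v"] by (auto simp: qq_def)

lemma exp_Suc:
  assumes n: "n \<ge> 1"
  shows "exp_magnet n blk k \<beta> \<sigma> (Suc t) i =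
    (\<Sum>v\<in>verts n. qq n blk k \<beta> \<sigma> v * exp_magnet n blk k \<beta> (\<sigma>(v := 1)) t i
        + (1 - qq n blk k \<beta> \<sigma> v) * exp_magnet n blk k \<beta> (\<sigma>(v := -1)) t i) / real n"
proof -
  let ?D = "\<lambda>\<tau>. glauber_dist n blk k \<beta> \<tau> t"
  let ?q = "qq n blk k \<beta> \<sigma>"
  have eq: "glauber_dist n blk k \<beta> \<sigma> (Suc t) = pmf_of_set (verts n) \<bind> (\<lambda>v.
     bernoulli_pmf (?q v) \<bind> (\<lambda>b. ?D (\<sigma>(v := (if b then 1 else -1)))))"
    by (simp add: dist_Suc glauber_step_def bind_assoc_pmf bind_return_pmf qq_def)
  have V: "verts n \<noteq> {}" "finite (verts n)" "card (verts n) = n" using n by (auto simp: verts_def)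
  have fin: "finite (set_pmf (bernoulli_pmf (?q v) \<bind> (\<lambda>b. ?D (\<sigma>(v := (if b then 1 else -1))))))" for v
    using n by (auto simp: set_bind_pmf finite_dist)
  have inner: "measure_pmf.expectation (bernoulli_pmf (?q v) \<bind> (\<lambda>b. ?D (\<sigma>(v := (if b then 1 else -1)))))
      (\<lambda>\<tau>. magnet n blk \<tau> i) = ?q v * exp_magnet n blk k \<beta> (\<sigma>(v := 1)) t i
        + (1 - ?q v) * exp_magnet n blk k \<beta> (\<sigma>(v := -1)) t i" for v
    apply (subst pmf_expectation_bind[where A=UNIV])
    using n qq_bounds[of n blk k \<beta> \<sigma> v] by (auto simp: finite_dist UNIV_bool exp_magnet_def)
  have "exp_magnet n blk k \<beta> \<sigma> (Suc t) i = (\<Sum>v\<in>verts n. measure_pmf.expectation (bernoulli_pmf (?q v) \<bind> (\<lambda>b. ?D (\<sigma>(v := (if b then 1 else -1)))))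
      (\<lambda>\<tau>. magnet n blk \<tau> i) /\<^sub>R real (card (verts n)))"
    unfolding exp_magnet_def eq
    by (rule pmf_expectation_bind_pmf_of_set[OF V(1,2) fin])
  then show ?thesis
    unfolding inner V(3) by (simp add: sum_divide_distrib divide_inverse mult.commute sum_distrib_left)
qed

lemma lf_upd_other:
  assumes "u \<in> verts n" "u \<noteq> v"
  shows "local_field n blk k (\<tau>(u := a)) v = local_field n blk k \<tau> v + (a - \<tau> u) * Kint n blk k v u"
proof -
  have fin: "finite (verts n - {v})" by (simp add: verts_def)
  have u: "u \<in> verts n - {v}" using assms by auto
  have "local_field n blk k (\<tau>(u := a)) v = Kint n blk k v u * a + (\<Sum>w\<in>verts n - {v} - {u}. Kint n blk k v w * \<tau> w)"
    unfolding local_field_def by (subst sum.remove[OF fin u]) (auto intro!: sum.cong)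
  moreover have "local_field n blk k \<tau> v = Kint n blk k v u * \<tau> u + (\<Sum>w\<in>verts n - {v} - {u}. Kint n blk k v w * \<tau> w)"
    unfolding local_field_def by (subst sum.remove[OF fin u]) auto
  ultimately show ?thesis by (simp add: algebra_simps)
qed

lemma lf_upd_self: "local_field n blk k (\<tau>(u := a)) u = local_field n blk k \<tau> u"
  unfolding local_field_def by (auto intro!: sum.cong)

lemma configs_upd: "\<tau> \<in> spin_configs n \<Longrightarrow> v \<in> verts n \<Longrightarrow> b = 1 \<or> b = -1 \<Longrightarrow> \<tau>(v := b) \<in> spin_configs n"
  unfolding spin_configs_def by auto

lemma mpv_Suc: "mat_pow_vec m A (Suc t) x = mat_pow_vec m A t (mat_vec m A x)"
  unfolding mat_pow_vec_def by (simp add: funpow_swap1)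

lemma mpv_Suc': "mat_pow_vec m A (Suc t) x = mat_vec m A (mat_pow_vec m A t x)"
  unfolding mat_pow_vec_def by simp

lemma mpv_cong: "(\<And>j. j < m \<Longrightarrow> x j = y j) \<Longrightarrow> i < m \<Longrightarrow> mat_pow_vec m A t x i = mat_pow_vec m A t y i"
proof (induction t arbitrary: i)
  case 0 then show ?case by (simp add: mat_pow_vec_def)
next
  case (Suc t) then show ?case by (simp add: mpv_Suc' mat_vec_def)
qed

lemma mpv_lin:
  assumes "finite L"
  shows "mat_pow_vec m A t (\<lambda>j. \<Sum>l\<in>L. c l * x l j) = (\<lambda>i. \<Sum>l\<in>L. c l * mat_pow_vec m A t (x l) i)"
proof (induction t)
  case 0 then show ?case by (simp add: mat_pow_vec_def)
next
  case (Suc t) then show ?case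
    by (simp add: mpv_Suc' mat_vec_def sum_distrib_left algebra_simps sum.swap[of _ L])
qed

lemma mpv_nonneg:
  assumes "\<And>i j. i < m \<Longrightarrow> j < m \<Longrightarrow> A i j \<ge> 0" "\<And>j. j < m \<Longrightarrow> x j \<ge> 0" "i < m"
  shows "mat_pow_vec m A t x i \<ge> 0"
  using assms(3)
proof (induction t arbitrary: i)
  case 0 then show ?case using assms(2) by (simp add: mat_pow_vec_def)
next
  case (Suc t) then show ?case using assms(1) by (auto simp: mpv_Suc' mat_vec_def intro!: sum_nonneg mult_nonneg_nonneg)
qed

lemma magnet_upd:
  assumes "u \<in> verts n"
  shows "magnet n blk (\<tau>(u := a)) i = magnet n blk \<tau> i + (if blk u = i then (a - \<tau> u) / real n else 0)"
proof -
  have fin: "finite {v \<in> verts n. blk v = i}" by (simp add: verts_def)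
  show ?thesis
  proof (cases "blk u = i")
    case True
    then have u: "u \<in> {v \<in> verts n. blk v = i}" using assms by auto
    show ?thesis unfolding magnet_def using True
      by (simp add: sum.remove[OF fin u] add_divide_distrib diff_divide_distrib)
  next
    case False then show ?thesis unfolding magnet_def by (auto intro!: sum.cong arg_cong[where f="\<lambda>x. x / _"])
  qed
qed

locale cw =
  fixes m n :: nat and p :: "nat \<Rightarrow> real" and k :: "nat \<Rightarrow> nat \<Rightarrow> real" and \<beta> :: real
    and blk :: "nat \<Rightarrow> nat"
  assumes n_pos: "n \<ge> 1" and blk_range: "\<forall>v\<in>verts n. blk v < m"
    and k_pos: "\<forall>i<m. \<forall>j<m. k i j > 0" and beta: "\<beta> \<ge> 0"
    and blk_size: "\<forall>i<m. real (card {v\<in>verts n. blk v = i}) = real n * p i"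
begin

abbreviation E where "E \<sigma> t i \<equiv> exp_magnet n blk k \<beta> \<sigma> t i"
abbreviation Q where "Q \<equiv> Qmat n p k \<beta>"
definition cc where "cc t b i = mat_pow_vec m Q t (\<lambda>j. if j = b then 2 / real n else 0) i"

lemma p_nonneg: "i < m \<Longrightarrow> p i \<ge> 0"
proof -
  assume i: "i < m"
  have "0 \<le> real n * p i" using blk_size i by (metis of_nat_0_le_iff)
  then show ?thesis using n_pos by (simp add: zero_le_mult_iff)
qed

lemma Q_nonneg: "i < m \<Longrightarrow> j < m \<Longrightarrow> Q i j \<ge> 0"
proof -
  assume ij: "i < m" "j < m"
  have a: "0 \<le> (if i = j then 1 - 1 / real n else 0)" using n_pos by (auto simp: field_simps)
  have "0 \<le> p i * k i j" using p_nonneg[OF ij(1)] k_pos ij by (simp add: less_imp_le)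
  then have b: "0 \<le> \<beta> / real n * (p i * k i j)" using beta by simp
  show ?thesis unfolding Qmat_def using a b by linarith
qed

lemma cc_nonneg: "i < m \<Longrightarrow> cc t b i \<ge> 0"
  unfolding cc_def by (rule mpv_nonneg) (auto simp: Q_nonneg)

lemma sum_blk: "(\<Sum>v\<in>verts n. g (blk v)) = (\<Sum>j<m. (real n * p j) * g j)"
proof -
  have "(\<Sum>v\<in>verts n. g (blk v)) = (\<Sum>j<m. \<Sum>v\<in>{v\<in>verts n. blk v = j}. g (blk v))"
    by (rule sum.group[symmetric]) (use blk_range in \<open>auto simp: verts_def\<close>)
  also have "\<dots> = (\<Sum>j<m. real (card {v\<in>verts n. blk v = j}) * g j)"
    by (rule sum.cong) auto
  also have "\<dots> = (\<Sum>j<m. (real n * p j) * g j)"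
    using blk_size by auto
  finally show ?thesis .
qed

lemma cc_Suc:
  assumes "b < m" "i < m"
  shows "cc (Suc t) b i = (1 - 1 / real n) * cc t b i + \<beta> / real n * (\<Sum>j<m. p j * k j b * cc t j i)"
proof -
  have "cc (Suc t) b i = mat_pow_vec m Q t (\<lambda>j. \<Sum>l<m. Q l b * (\<lambda>l j. if j = l then 2 / real n else 0) l j) i"
    unfolding cc_def mpv_Suc
    by (rule mpv_cong[OF _ assms(2)]) (auto simp: mat_vec_def assms(1) if_distrib cong: if_cong)
  also have "\<dots> = (\<Sum>l<m. Q l b * cc t l i)"
    by (subst mpv_lin) (auto simp: cc_def)
  also have "\<dots> = (\<Sum>l<m. (if l = b then (1 - 1 / real n) * cc t l i else 0) + \<beta> / real n * (p l * k l b * cc t l i))"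
    by (rule sum.cong) (auto simp: Qmat_def algebra_simps)
  also have "\<dots> = (1 - 1 / real n) * cc t b i + \<beta> / real n * (\<Sum>j<m. p j * k j b * cc t j i)"
    using assms by (simp add: sum.distrib sum_distrib_left)
  finally show ?thesis .
qed


lemma exp0: "E \<sigma> 0 i = magnet n blk \<sigma> i"
  by (simp add: exp_magnet_def glauber_dist_def)

lemma nb:
  assumes "\<tau> \<in> spin_configs n" "u \<in> verts n" "\<tau> u = -1" "i < m"
  shows "0 \<le> E (\<tau>(u := 1)) t i - E \<tau> t i \<and> E (\<tau>(u := 1)) t i - E \<tau> t i \<le> cc t (blk u) i"
  using assms
proof (induction t arbitrary: \<tau> u i)
  case 0
  have "magnet n blk (\<tau>(u := 1)) i = magnet n blk \<tau> i + (if blk u = i then (1 - \<tau> u) / real n else 0)"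
    by (rule magnet_upd) (use 0 in auto)
  then show ?case using n_pos 0 unfolding exp0 cc_def mat_pow_vec_def
    by (auto simp del: fun_upd_apply)
next
  case (Suc t)
  note tau = Suc.prems(1) and u = Suc.prems(2) and tu = Suc.prems(3) and i = Suc.prems(4)
  let ?a = "\<tau>(u := 1)"
  let ?H = "\<lambda>\<rho>. E \<rho> t i"
  let ?q = "qq n blk k \<beta>"
  define \<Phi> where "\<Phi> \<rho> v = ?q \<rho> v * ?H (\<rho>(v := 1)) + (1 - ?q \<rho> v) * ?H (\<rho>(v := -1))" for \<rho> v
  define bnd where "bnd v = cc t (blk u) i - (if v = u then cc t (blk u) i else 0)
     + \<beta> * (k (blk v) (blk u) / real n) * cc t (blk v) i" for v
  have bu: "blk u < m" using u blk_range by auto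
  have T: "0 \<le> \<Phi> ?a v - \<Phi> \<tau> v \<and> \<Phi> ?a v - \<Phi> \<tau> v \<le> bnd v" if v: "v \<in> verts n" for v
  proof -
    have bv: "blk v < m" using v blk_range by auto
    have extra: "0 \<le> \<beta> * (k (blk v) (blk u) / real n) * cc t (blk v) i"
      using beta k_pos bu bv cc_nonneg[OF i] by (simp add: less_imp_le)
    show ?thesis
    proof (cases "v = u")
      case True
      have "\<Phi> ?a v = \<Phi> \<tau> v" unfolding \<Phi>_def True by (simp add: qq_def lf_upd_self)
      then show ?thesis using extra True by (simp add: bnd_def)
    next
      case False
      have c1: "\<tau>(v := 1) \<in> spin_configs n" "\<tau>(v := -1) \<in> spin_configs n"
        using configs_upd tau v by auto
      have a1: "?a \<in> spin_configs n" using configs_upd tau u by auto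
      have c3: "?a(v := -1) \<in> spin_configs n" using configs_upd[OF a1 v] by auto
      have D1: "0 \<le> ?H (?a(v := 1)) - ?H (\<tau>(v := 1)) \<and> ?H (?a(v := 1)) - ?H (\<tau>(v := 1)) \<le> cc t (blk u) i"
      proof -
        have e1: "?a(v := 1) = (\<tau>(v := 1))(u := 1)" using False by (simp add: fun_upd_twist)
        have pu: "(\<tau>(v := 1)) u = -1" using False tu by simp
        show ?thesis unfolding e1 by (rule Suc.IH[OF c1(1) u pu i])
      qed
      have D2: "0 \<le> ?H (?a(v := -1)) - ?H (\<tau>(v := -1)) \<and> ?H (?a(v := -1)) - ?H (\<tau>(v := -1)) \<le> cc t (blk u) i"
      proof -
        have e1: "?a(v := -1) = (\<tau>(v := -1))(u := 1)" using False by (simp add: fun_upd_twist)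
        have pu: "(\<tau>(v := -1)) u = -1" using False tu by simp
        show ?thesis unfolding e1 by (rule Suc.IH[OF c1(2) u pu i])
      qed
      have D3: "0 \<le> ?H (?a(v := 1)) - ?H (?a(v := -1)) \<and> ?H (?a(v := 1)) - ?H (?a(v := -1)) \<le> cc t (blk v) i"
      proof -
        have e1: "?a(v := 1) = (?a(v := -1))(v := 1)" by simp
        have pu: "(?a(v := -1)) v = -1" by simp
        show ?thesis unfolding e1 by (rule Suc.IH[OF c3 v pu i])
      qed
      define L where "L = local_field n blk k \<tau> v"
      define K where "K = Kint n blk k v u"
      have K0: "0 \<le> K" using k_pos bu bv by (simp add: K_def Kint_def less_imp_le)
      have lfa: "local_field n blk k ?a v = L + 2 * K"
        using lf_upd_other[OF u, where v=v and \<tau>=\<tau> and a=1] False tu by (simp add: L_def K_def)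
      have qa: "?q ?a v = (1 + tanh (\<beta> * (L + 2 * K))) / 2" by (simp add: qq_def lfa)
      have qt: "?q \<tau> v = (1 + tanh (\<beta> * L)) / 2" by (simp add: qq_def L_def)
      have mono: "tanh (\<beta> * L) \<le> tanh (\<beta> * (L + 2 * K))"
        using beta K0 by (simp add: mult_left_mono)
      have lip: "tanh (\<beta> * (L + 2 * K)) - tanh (\<beta> * L) \<le> \<beta> * (L + 2 * K) - \<beta> * L"
        by (rule tanh_lip) (use beta K0 in \<open>simp add: mult_left_mono\<close>)
      define q where "q = ?q ?a v"
      define q' where "q' = ?q \<tau> v"
      have qq0: "0 \<le> q'" "q' \<le> 1" "0 \<le> 1 - q" using qq_bounds[of n blk k \<beta>] by (auto simp: q_def q'_def less_imp_le)
      have dq: "0 \<le> q - q'" "q - q' \<le> \<beta> * K"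
      proof -
        have lip': "tanh (\<beta> * (L + 2 * K)) - tanh (\<beta> * L) \<le> 2 * (\<beta> * K)"
          using lip by (simp add: algebra_simps)
        show "0 \<le> q - q'" unfolding q_def q'_def qa qt using mono lip' by (simp add: field_simps)
        show "q - q' \<le> \<beta> * K" unfolding q_def q'_def qa qt using mono lip' by (simp add: field_simps)
      qed
      define d1 where "d1 = ?H (?a(v := 1)) - ?H (\<tau>(v := 1))"
      define d2 where "d2 = ?H (?a(v := -1)) - ?H (\<tau>(v := -1))"
      define d3 where "d3 = ?H (?a(v := 1)) - ?H (?a(v := -1))"
      have eq: "\<Phi> ?a v - \<Phi> \<tau> v = q' * d1 + (1 - q) * d2 + (q - q') * (d2 + d3)"
        unfolding \<Phi>_def d1_def d2_def d3_def q_def q'_def by (simp add: algebra_simps)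
      have b1: "0 \<le> q' * d1" "q' * d1 \<le> q' * cc t (blk u) i"
        using D1 qq0 by (auto simp: d1_def intro: mult_left_mono)
      have b2: "0 \<le> (1 - q) * d2" "(1 - q) * d2 \<le> (1 - q) * cc t (blk u) i"
        using D2 qq0 by (auto simp: d2_def intro: mult_left_mono)
      have b3: "0 \<le> (q - q') * (d2 + d3)" "(q - q') * (d2 + d3) \<le> (q - q') * (cc t (blk u) i + cc t (blk v) i)"
        using D2 D3 dq by (auto simp: d2_def d3_def intro: mult_left_mono)
      have b4: "(q - q') * cc t (blk v) i \<le> \<beta> * K * cc t (blk v) i"
        using dq cc_nonneg[OF i] by (simp add: mult_right_mono)
      show ?thesis
        using b1 b2 b3 b4 False unfolding eq bnd_def K_def Kint_def
        by (simp add: algebra_simps) 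
    qed
  qed
  have V: "finite (verts n)" "card (verts n) = n" by (auto simp: verts_def)
  have diff: "E ?a (Suc t) i - E \<tau> (Suc t) i = (\<Sum>v\<in>verts n. \<Phi> ?a v - \<Phi> \<tau> v) / real n"
    unfolding exp_Suc[OF n_pos] \<Phi>_def by (simp add: sum_subtractf diff_divide_distrib)
  have lo: "0 \<le> (\<Sum>v\<in>verts n. \<Phi> ?a v - \<Phi> \<tau> v)" using T by (auto intro: sum_nonneg)
  have "(\<Sum>v\<in>verts n. \<Phi> ?a v - \<Phi> \<tau> v) \<le> (\<Sum>v\<in>verts n. bnd v)" using T by (auto intro: sum_mono)
  also have "\<dots> = real n * cc t (blk u) i - cc t (blk u) i
      + \<beta> / real n * (\<Sum>v\<in>verts n. k (blk v) (blk u) * cc t (blk v) i)"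
    unfolding bnd_def using u V
    by (simp add: sum.distrib sum_subtractf sum_distrib_left algebra_simps)
  also have "(\<Sum>v\<in>verts n. k (blk v) (blk u) * cc t (blk v) i) = (\<Sum>j<m. (real n * p j) * (k j (blk u) * cc t j i))"
    by (rule sum_blk)
  finally have up: "(\<Sum>v\<in>verts n. \<Phi> ?a v - \<Phi> \<tau> v) \<le> real n * cc t (blk u) i - cc t (blk u) i
      + \<beta> * (\<Sum>j<m. p j * k j (blk u) * cc t j i)"
    using n_pos by (simp add: sum_distrib_left algebra_simps del: fun_upd_apply)
  have "E ?a (Suc t) i - E \<tau> (Suc t) i \<le> (real n * cc t (blk u) i - cc t (blk u) i
      + \<beta> * (\<Sum>j<m. p j * k j (blk u) * cc t j i)) / real n"
    unfolding diff using up n_pos by (simp add: divide_right_mono)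
  also have "\<dots> = cc (Suc t) (blk u) i"
    unfolding cc_Suc[OF bu i] using n_pos by (simp add: field_simps)
  finally have up2: "E ?a (Suc t) i - E \<tau> (Suc t) i \<le> cc (Suc t) (blk u) i" .
  have lo2: "0 \<le> E ?a (Suc t) i - E \<tau> (Suc t) i" unfolding diff using lo by simp
  show ?case using up2 lo2 by blast
qed


definition cls where "cls \<sigma> j b = {v \<in> verts n. blk v = j \<and> \<sigma> v = b}"

lemma cls_card:
  assumes \<sigma>: "\<sigma> \<in> spin_configs n"
  shows "real (card (cls \<sigma> j 1)) = (real (card {v\<in>verts n. blk v = j}) + real n * magnet n blk \<sigma> j) / 2"
    "real (card (cls \<sigma> j (-1))) = (real (card {v\<in>verts n. blk v = j}) - real n * magnet n blk \<sigma> j) / 2"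
proof -
  have un: "{v\<in>verts n. blk v = j} = cls \<sigma> j 1 \<union> cls \<sigma> j (-1)"
    using \<sigma> by (auto simp: cls_def spin_configs_def)
  have fin: "finite (cls \<sigma> j b)" for b by (simp add: cls_def verts_def)
  have dis: "cls \<sigma> j 1 \<inter> cls \<sigma> j (-1) = {}" by (auto simp: cls_def)
  have c: "card {v\<in>verts n. blk v = j} = card (cls \<sigma> j 1) + card (cls \<sigma> j (-1))"
    unfolding un by (rule card_Un_disjoint[OF fin fin dis])
  have "real n * magnet n blk \<sigma> j = (\<Sum>v\<in>{v\<in>verts n. blk v = j}. \<sigma> v)"
    using n_pos by (simp add: magnet_def)
  also have "\<dots> = (\<Sum>v\<in>cls \<sigma> j 1. \<sigma> v) + (\<Sum>v\<in>cls \<sigma> j (-1). \<sigma> v)"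
    unfolding un by (rule sum.union_disjoint[OF fin fin dis])
  also have "\<dots> = real (card (cls \<sigma> j 1)) - real (card (cls \<sigma> j (-1)))"
    by (simp add: cls_def)
  finally have m: "real n * magnet n blk \<sigma> j = real (card (cls \<sigma> j 1)) - real (card (cls \<sigma> j (-1)))" .
  show "real (card (cls \<sigma> j 1)) = (real (card {v\<in>verts n. blk v = j}) + real n * magnet n blk \<sigma> j) / 2"
    using m c by simp
  show "real (card (cls \<sigma> j (-1))) = (real (card {v\<in>verts n. blk v = j}) - real n * magnet n blk \<sigma> j) / 2"
    using m c by simp
qed

lemma group_eq:
  fixes F F' :: "nat \<Rightarrow> real"
  assumes \<sigma>: "\<sigma> \<in> spin_configs n" and \<sigma>': "\<sigma>' \<in> spin_configs n"
    and mag: "\<And>j. j < m \<Longrightarrow> magnet n blk \<sigma> j = magnet n blk \<sigma>' j"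
    and FF: "\<And>v w. v \<in> verts n \<Longrightarrow> w \<in> verts n \<Longrightarrow> blk v = blk w \<Longrightarrow> \<sigma> v = \<sigma>' w \<Longrightarrow> F v = F' w"
  shows "(\<Sum>v\<in>verts n. F v) = (\<Sum>v\<in>verts n. F' v)"
proof -
  let ?T = "{..<m} \<times> {1, -1::real}"
  have finT: "finite ?T" by simp
  have finV: "finite (verts n)" by (simp add: verts_def)
  have img: "(\<lambda>v. (blk v, \<rho> v)) ` verts n \<subseteq> ?T" if "\<rho> \<in> spin_configs n" for \<rho>
    using that blk_range by (auto simp: spin_configs_def)
  have g: "(\<Sum>v\<in>verts n. G v) = (\<Sum>y\<in>?T. \<Sum>v\<in>{v\<in>verts n. (blk v, \<rho> v) = y}. G v)"
    if "\<rho> \<in> spin_configs n" for \<rho> and G :: "nat \<Rightarrow> real"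
    by (rule sum.group[symmetric, OF finV finT img[OF that]])
  have cl: "{v\<in>verts n. (blk v, \<rho> v) = (j, b)} = cls \<rho> j b" for \<rho> j b
    by (auto simp: cls_def)
  have eqc: "(\<Sum>v\<in>cls \<sigma> j b. F v) = (\<Sum>v\<in>cls \<sigma>' j b. F' v)" if jb: "(j, b) \<in> ?T" for j b
  proof -
    have j: "j < m" using jb by auto
    have finc: "finite (cls \<rho> j b)" for \<rho> by (simp add: cls_def verts_def)
    have cards: "card (cls \<sigma> j b) = card (cls \<sigma>' j b)"
    proof -
      have "real (card (cls \<sigma> j b)) = real (card (cls \<sigma>' j b))"
        using jb cls_card[OF \<sigma>, of j] cls_card[OF \<sigma>', of j] mag[OF j] by auto
      then show ?thesis by simp
    qed
    show ?thesis
    proof (cases "cls \<sigma> j b = {}")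
      case True
      then have "cls \<sigma>' j b = {}" using cards finc by (metis card_0_eq card.empty)
      then show ?thesis using True by simp
    next
      case False
      then obtain v0 where v0: "v0 \<in> cls \<sigma> j b" by auto
      have "cls \<sigma>' j b \<noteq> {}" using cards False finc by (metis card_0_eq card.empty)
      then obtain w0 where w0: "w0 \<in> cls \<sigma>' j b" by auto
      have "(\<Sum>v\<in>cls \<sigma> j b. F v) = (\<Sum>v\<in>cls \<sigma> j b. F' w0)"
        by (rule sum.cong) (use w0 in \<open>auto simp: cls_def intro!: FF\<close>)
      moreover have "(\<Sum>v\<in>cls \<sigma>' j b. F' v) = (\<Sum>v\<in>cls \<sigma>' j b. F' w0)"
      proof (rule sum.cong)
        fix w assume w: "w \<in> cls \<sigma>' j b"
        have "F v0 = F' w" using v0 w by (auto simp: cls_def intro!: FF)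
        moreover have "F v0 = F' w0" using v0 w0 by (auto simp: cls_def intro!: FF)
        ultimately show "F' w = F' w0" by simp
      qed simp
      ultimately show ?thesis using cards by (simp only: sum_constant)
    qed
  qed
  show ?thesis
    unfolding g[OF \<sigma>, of F] g[OF \<sigma>', of F']
  proof (rule sum.cong[OF refl])
    fix y assume y: "y \<in> ?T"
    then obtain j b where jb: "y = (j, b)" by (cases y)
    show "(\<Sum>v\<in>{v\<in>verts n. (blk v, \<sigma> v) = y}. F v) = (\<Sum>v\<in>{v\<in>verts n. (blk v, \<sigma>' v) = y}. F' v)"
      unfolding jb cl using eqc y jb by simp
  qed
qed

lemma lf_magnet:
  assumes "v \<in> verts n"
  shows "local_field n blk k \<sigma> v = (\<Sum>j<m. k (blk v) j * magnet n blk \<sigma> j) - k (blk v) (blk v) * \<sigma> v / real n"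
proof -
  have finV: "finite (verts n)" by (simp add: verts_def)
  have "local_field n blk k \<sigma> v = (\<Sum>w\<in>verts n. Kint n blk k v w * \<sigma> w) - Kint n blk k v v * \<sigma> v"
    unfolding local_field_def using assms finV by (simp add: sum_diff1)
  also have "(\<Sum>w\<in>verts n. Kint n blk k v w * \<sigma> w) = (\<Sum>j<m. \<Sum>w\<in>{w\<in>verts n. blk w = j}. Kint n blk k v w * \<sigma> w)"
    by (rule sum.group[symmetric]) (use blk_range finV in auto)
  also have "\<dots> = (\<Sum>j<m. k (blk v) j * magnet n blk \<sigma> j)"
    by (rule sum.cong) (auto simp: Kint_def magnet_def sum_distrib_left sum_divide_distrib)
  finally show ?thesis by (simp add: Kint_def)
qed

lemma magnet_out: "j \<ge> m \<Longrightarrow> magnet n blk \<sigma> j = 0"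
proof -
  assume "j \<ge> m"
  then have e: "{v\<in>verts n. blk v = j} = {}" using blk_range by force
  show ?thesis unfolding magnet_def e by simp
qed

lemma exp_magnet_only:
  assumes "\<sigma> \<in> spin_configs n" "\<sigma>' \<in> spin_configs n" "\<And>j. j < m \<Longrightarrow> magnet n blk \<sigma> j = magnet n blk \<sigma>' j"
  shows "E \<sigma> t i = E \<sigma>' t i"
  using assms
proof (induction t arbitrary: \<sigma> \<sigma>' i)
  case 0
  then show ?case by (cases "i < m") (auto simp: exp0 magnet_out)
next
  case (Suc t)
  let ?q = "qq n blk k \<beta>"
  show ?case
    unfolding exp_Suc[OF n_pos]
  proof (rule arg_cong[where f="\<lambda>x. x / real n"], rule group_eq[OF Suc.prems(1,2,3)])
    fix v w assume v: "v \<in> verts n" and w: "w \<in> verts n" and b: "blk v = blk w" and s: "\<sigma> v = \<sigma>' w"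
    have q: "?q \<sigma> v = ?q \<sigma>' w"
      unfolding qq_def lf_magnet[OF v] lf_magnet[OF w] using b s Suc.prems(3) by simp
    have H: "E (\<sigma>(v := c)) t i = E (\<sigma>'(w := c)) t i" if c: "c = 1 \<or> c = -1" for c
    proof (rule Suc.IH)
      show "\<sigma>(v := c) \<in> spin_configs n" using configs_upd[OF Suc.prems(1) v c] .
      show "\<sigma>'(w := c) \<in> spin_configs n" using configs_upd[OF Suc.prems(2) w c] .
      fix j assume j: "j < m"
      show "magnet n blk (\<sigma>(v := c)) j = magnet n blk (\<sigma>'(w := c)) j"
        unfolding magnet_upd[OF v] magnet_upd[OF w] using b s Suc.prems(3)[OF j] by simp
    qed
    show "?q \<sigma> v * E (\<sigma>(v := 1)) t i + (1 - ?q \<sigma> v) * E (\<sigma>(v := - 1)) t i =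
          ?q \<sigma>' w * E (\<sigma>'(w := 1)) t i + (1 - ?q \<sigma>' w) * E (\<sigma>'(w := - 1)) t i"
      using q H by simp
  qed
qed


definition upd where "upd A \<sigma> = (\<lambda>v. if v \<in> A then 1 else \<sigma> v)"

lemma tele:
  assumes "finite A" "A \<subseteq> verts n" "\<sigma> \<in> spin_configs n" "\<forall>u\<in>A. \<sigma> u = -1" "i < m"
  shows "upd A \<sigma> \<in> spin_configs n \<and>
    (\<forall>j. magnet n blk (upd A \<sigma>) j = magnet n blk \<sigma> j + (\<Sum>u\<in>A. if blk u = j then 2 / real n else 0)) \<and>
    0 \<le> E (upd A \<sigma>) t i - E \<sigma> t i \<and> E (upd A \<sigma>) t i - E \<sigma> t i \<le> (\<Sum>u\<in>A. cc t (blk u) i)"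
  using assms
proof (induction A rule: finite_induct)
  case empty
  have "upd {} \<sigma> = \<sigma>" by (simp add: upd_def)
  then show ?case using empty by simp
next
  case (insert x F)
  let ?s = "upd F \<sigma>"
  have IH: "?s \<in> spin_configs n \<and>
    (\<forall>j. magnet n blk ?s j = magnet n blk \<sigma> j + (\<Sum>u\<in>F. if blk u = j then 2 / real n else 0)) \<and>
    0 \<le> E ?s t i - E \<sigma> t i \<and> E ?s t i - E \<sigma> t i \<le> (\<Sum>u\<in>F. cc t (blk u) i)"
    using insert by auto
  have e: "upd (insert x F) \<sigma> = ?s(x := 1)" by (auto simp: upd_def)
  have x: "x \<in> verts n" using insert by auto
  have sx: "?s x = -1" using insert by (auto simp: upd_def)
  have N: "0 \<le> E (?s(x := 1)) t i - E ?s t i \<and> E (?s(x := 1)) t i - E ?s t i \<le> cc t (blk x) i"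
  proof -
    have "?s \<in> spin_configs n" using IH by blast
    then show ?thesis by (rule nb[where \<tau>="upd F \<sigma>" and u=x, OF _ x sx insert.prems(4)])
  qed
  have C: "?s(x := 1) \<in> spin_configs n" using configs_upd[of ?s n x 1] IH x by simp
  have M: "magnet n blk (?s(x := 1)) j = magnet n blk \<sigma> j + (\<Sum>u\<in>insert x F. if blk u = j then 2 / real n else 0)" for j
    unfolding magnet_upd[OF x] using IH sx insert.hyps by simp
  have S: "(\<Sum>u\<in>insert x F. cc t (blk u) i) = cc t (blk x) i + (\<Sum>u\<in>F. cc t (blk u) i)"
    using insert.hyps by simp
  show ?case unfolding e
  proof (intro conjI allI)
    show "?s(x := 1) \<in> spin_configs n" by (rule C)
    show "magnet n blk (?s(x := 1)) j = magnet n blk \<sigma> j + (\<Sum>u\<in>insert x F. if blk u = j then 2 / real n else 0)" for j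
      by (rule M)
    show "0 \<le> E (?s(x := 1)) t i - E \<sigma> t i" using N IH by linarith
    show "E (?s(x := 1)) t i - E \<sigma> t i \<le> (\<Sum>u\<in>insert x F. cc t (blk u) i)" using N IH S by linarith
  qed
qed

end

theorem lemma4p8:
  fixes m n :: nat and p :: "nat \<Rightarrow> real" and k :: "nat \<Rightarrow> nat \<Rightarrow> real" and \<beta> :: real
    and blk :: "nat \<Rightarrow> nat" and \<sigma> \<sigma>' :: "nat \<Rightarrow> real" and t :: nat
  assumes m_pos: "m \<ge> 1"
    and p_pos: "\<forall>i<m. p i > 0"
    and p_sum: "(\<Sum>i<m. p i) = 1"
    and k_sym: "\<forall>i<m. \<forall>j<m. k i j = k j i"
    and k_pos: "\<forall>i<m. \<forall>j<m. k i j > 0"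
    and beta_nonneg: "\<beta> \<ge> 0"
    and n_pos: "n \<ge> 1"
    and blk_range: "\<forall>v\<in>verts n. blk v < m"
    and blk_size: "\<forall>i<m. real (card {v\<in>verts n. blk v = i}) = real n * p i"
    and sigma: "\<sigma> \<in> spin_configs n" and sigma': "\<sigma>' \<in> spin_configs n"
    and start_ge: "\<forall>i<m. magnet n blk \<sigma> i \<ge> magnet n blk \<sigma>' i"
  shows "\<forall>i<m.
           0 \<le> exp_magnet n blk k \<beta> \<sigma> t i - exp_magnet n blk k \<beta> \<sigma>' t i \<and>
           exp_magnet n blk k \<beta> \<sigma> t i - exp_magnet n blk k \<beta> \<sigma>' t i
             \<le> mat_pow_vec m (Qmat n p k \<beta>) t (\<lambda>j. magnet n blk \<sigma> j - magnet n blk \<sigma>' j) i"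
proof -
  interpret cw m n p k \<beta> blk
    using n_pos blk_range k_pos beta_nonneg blk_size by unfold_locales auto
  define c1 where "c1 (\<rho>::nat\<Rightarrow>real) j = card (cls \<rho> j 1)" for \<rho> j
  have d_ok: "c1 \<sigma>' j \<le> c1 \<sigma> j \<and> c1 \<sigma> j - c1 \<sigma>' j \<le> card (cls \<sigma>' j (-1))" if j: "j < m" for j
  proof -
    have a: "real (c1 \<sigma> j) - real (c1 \<sigma>' j) = real n * (magnet n blk \<sigma> j - magnet n blk \<sigma>' j) / 2"
      unfolding c1_def cls_card(1)[OF sigma] cls_card(1)[OF sigma'] by (simp add: field_simps)
    have "0 \<le> real n * (magnet n blk \<sigma> j - magnet n blk \<sigma>' j)" using start_ge j by simp
    then have le: "c1 \<sigma>' j \<le> c1 \<sigma> j" using a by simp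
    have b: "real (c1 \<sigma> j) \<le> real (c1 \<sigma>' j) + real (card (cls \<sigma>' j (-1)))"
      using cls_card(1,2)[OF sigma', of j] cls_card(1,2)[OF sigma, of j] unfolding c1_def by simp
    show ?thesis using le b by (simp add: of_nat_diff)
  qed
  have "\<forall>j\<in>{..<m}. \<exists>S. S \<subseteq> cls \<sigma>' j (-1) \<and> card S = c1 \<sigma> j - c1 \<sigma>' j"
  proof
    fix j assume "j \<in> {..<m}"
    then have "c1 \<sigma> j - c1 \<sigma>' j \<le> card (cls \<sigma>' j (-1))" using d_ok by simp
    then obtain S where "S \<subseteq> cls \<sigma>' j (-1)" "card S = c1 \<sigma> j - c1 \<sigma>' j"
      using obtain_subset_with_card_n by metis
    then show "\<exists>S. S \<subseteq> cls \<sigma>' j (-1) \<and> card S = c1 \<sigma> j - c1 \<sigma>' j" by blast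
  qed
  then obtain Sf where Sf: "\<And>j. j < m \<Longrightarrow> Sf j \<subseteq> cls \<sigma>' j (-1) \<and> card (Sf j) = c1 \<sigma> j - c1 \<sigma>' j"
    by (metis lessThan_iff)
  define A where "A = (\<Union>j<m. Sf j)"
  have AV: "A \<subseteq> verts n" using Sf by (force simp: A_def cls_def)
  have finA: "finite A" using AV finite_subset by (auto simp: verts_def)
  have Am: "\<forall>u\<in>A. \<sigma>' u = -1" using Sf by (force simp: A_def cls_def)
  have Aj: "A \<inter> {u. blk u = j} = Sf j" if j: "j < m" for j
    using Sf j by (force simp: A_def cls_def)
  let ?s = "upd A \<sigma>'"
  have T: "?s \<in> spin_configs n \<and>
    (\<forall>j. magnet n blk ?s j = magnet n blk \<sigma>' j + (\<Sum>u\<in>A. if blk u = j then 2 / real n else 0)) \<and>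
    0 \<le> E ?s t i - E \<sigma>' t i \<and> E ?s t i - E \<sigma>' t i \<le> (\<Sum>u\<in>A. cc t (blk u) i)" if "i < m" for i
    by (rule tele[OF finA AV sigma' Am that])
  have T1: "?s \<in> spin_configs n"
    and T2: "\<And>j. magnet n blk ?s j = magnet n blk \<sigma>' j + (\<Sum>u\<in>A. if blk u = j then 2 / real n else 0)"
    using T[of 0] m_pos by auto
  have Msum: "(\<Sum>u\<in>A. if blk u = j then 2 / real n else 0) = magnet n blk \<sigma> j - magnet n blk \<sigma>' j"
    if j: "j < m" for j
  proof -
    have "(\<Sum>u\<in>A. if blk u = j then 2 / real n else 0) = 2 / real n * real (card (Sf j))"
      using finA by (simp add: sum.If_cases Aj[OF j])
    also have "\<dots> = 2 / real n * (real (c1 \<sigma> j) - real (c1 \<sigma>' j))"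
      using Sf[OF j] d_ok[OF j] by (simp add: of_nat_diff)
    also have "\<dots> = magnet n blk \<sigma> j - magnet n blk \<sigma>' j"
      unfolding c1_def cls_card(1)[OF sigma] cls_card(1)[OF sigma'] using n_pos by (simp add: field_simps)
    finally show ?thesis .
  qed
  have same: "E \<sigma> t i = E ?s t i" for i
    by (rule exp_magnet_only[OF sigma T1]) (simp add: T2 Msum)
  show ?thesis
  proof (intro allI impI)
    fix i assume i: "i < m"
    have up: "(\<Sum>u\<in>A. cc t (blk u) i) = mat_pow_vec m Q t (\<lambda>j. magnet n blk \<sigma> j - magnet n blk \<sigma>' j) i"
    proof -
      have "(\<Sum>u\<in>A. cc t (blk u) i) = (\<Sum>u\<in>A. 1 * mat_pow_vec m Q t ((\<lambda>u j. if j = blk u then 2 / real n else 0) u) i)"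
        by (simp add: cc_def)
      also have "\<dots> = mat_pow_vec m Q t (\<lambda>j. \<Sum>u\<in>A. 1 * (\<lambda>u j. if j = blk u then 2 / real n else 0) u j) i"
        by (subst mpv_lin[OF finA]) simp
      also have "\<dots> = mat_pow_vec m Q t (\<lambda>j. magnet n blk \<sigma> j - magnet n blk \<sigma>' j) i"
        by (rule mpv_cong[OF _ i]) (simp add: Msum[symmetric] eq_commute)
      finally show ?thesis .
    qed
    show "0 \<le> E \<sigma> t i - E \<sigma>' t i \<and> E \<sigma> t i - E \<sigma>' t i \<le> mat_pow_vec m Q t (\<lambda>j. magnet n blk \<sigma> j - magnet n blk \<sigma>' j) i"
      using T[OF i] same[of i] up by simp
  qed
qed

end
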